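(* Assume $4\gamma^2\kappa\|\sigma_1\|_{L^1(\mathbb T^d)}^2<1$ and let $k\in\mathbb Z^d$. Let $w\in C^0([0,\infty);H^1(\mathbb T^d;\mathbb C))$ be the solution of the linearized Hartree equation $$i\partial_t w+\tfrac12\Delta_x w+ik\cdot\nabla_x w=-2\gamma^2\kappa\,\Sigma\star\mathrm{Re}(w)$$ with initial datum $w^{\mathrm{Init}}\in H^1(\mathbb T^d)$ satisfying $\int_{\mathbb T^d}w^{\mathrm{Init}}dx=0$. Then there is a constant $C>0$ such that $\sup_{t\ge0}\|w(t,\cdot)\|_{H^1(\mathbb T^d)}\le C$.
   Context: Let $d\ge1$, $n\ge3$, $\mathbb T^d=(\mathbb R/2\pi\mathbb Z)^d$. $\sigma_1:\mathbb T^d\to[0,\infty)$ is $C^\infty$, radially symmetric, with $\int_{\mathbb T^d}\sigma_1\neq0$; $\sigma_2:\mathbb R^n\to[0,\infty)$ is $C^\infty$, radially symmetric, compactly supported, with $(-\Delta)^{-1/2}\sigma_2\in L^2(\mathbb R^n)$. $\kappa=\int_{\mathbb R^n}\frac{|\widehat\sigma_2(\xi)|^2}{|\xi|^2}\frac{d\xi}{(2\pi)^n}$ with $\widehat\varphi(\xi)=\int\varphi(z)e^{-i\xi\cdot z}dz$; $\Sigma=\sigma_1\star\sigma_1$ (convolution on $\mathbb T^d$); $\gamma>0$. *)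

theory Defs
  imports "HOL-Analysis.Analysis"
begin

definition partial_deriv :: "'a::finite \<Rightarrow> (real^'a \<Rightarrow> real) \<Rightarrow> real^'a \<Rightarrow> real" where
  "partial_deriv i f x = deriv (\<lambda>h. f (x + h *\<^sub>R axis i 1)) 0"

fun iter_pderiv :: "'a::finite list \<Rightarrow> (real^'a \<Rightarrow> real) \<Rightarrow> real^'a \<Rightarrow> real" where
  "iter_pderiv [] f = f"
| "iter_pderiv (i # is) f = partial_deriv i (iter_pderiv is f)"

definition smooth_fun :: "(real^'a::finite \<Rightarrow> real) \<Rightarrow> bool" where
  "smooth_fun f \<longleftrightarrow> (\<forall>is. continuous_on UNIV (iter_pderiv is f) \<and>
     (\<forall>i x. (\<lambda>h. iter_pderiv is f (x + h *\<^sub>R axis i 1)) differentiable (at 0)))"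

section \<open>The torus T^d = (R / 2 pi Z)^d, modelled by 2 pi-periodic functions on R^d\<close>

definition torus_cube :: "(real^'d::finite) set" where
  "torus_cube = {x. \<forall>i. 0 \<le> x $ i \<and> x $ i \<le> 2 * pi}"

definition periodic_fun :: "(real^'d::finite \<Rightarrow> 'b) \<Rightarrow> bool" where
  "periodic_fun f \<longleftrightarrow> (\<forall>x i. f (x + (2 * pi) *\<^sub>R axis i 1) = f x)"

definition torus_radial :: "(real^'d::finite \<Rightarrow> real) \<Rightarrow> bool" where
  "torus_radial f \<longleftrightarrow> (\<forall>x y. (\<forall>i. -pi < x $ i \<and> x $ i \<le> pi) \<longrightarrow> (\<forall>i. -pi < y $ i \<and> y $ i \<le> pi)
      \<longrightarrow> norm x = norm y \<longrightarrow> f x = f y)"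

definition torus_integral :: "(real^'d::finite \<Rightarrow> 'b::{banach,second_countable_topology}) \<Rightarrow> 'b" where
  "torus_integral f = integral\<^sup>L (lebesgue_on torus_cube) f"

definition torus_L1_norm :: "(real^'d::finite \<Rightarrow> real) \<Rightarrow> real" where
  "torus_L1_norm f = torus_integral (\<lambda>x. \<bar>f x\<bar>)"

definition torus_conv :: "(real^'d::finite \<Rightarrow> real) \<Rightarrow> (real^'d \<Rightarrow> real) \<Rightarrow> real^'d \<Rightarrow> real" where
  "torus_conv f g x = torus_integral (\<lambda>y. f (x - y) * g y)"

definition int_dot :: "int^'d::finite \<Rightarrow> real^'d \<Rightarrow> real" where
  "int_dot m x = (\<Sum>i\<in>UNIV. of_int (m $ i) * x $ i)"

definition fourier_coeff :: "(real^'d::finite \<Rightarrow> complex) \<Rightarrow> int^'d \<Rightarrow> complex" where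
  "fourier_coeff f m = complex_of_real ((2 * pi) powr (- real CARD('d))) *
     torus_integral (\<lambda>x. f x * cis (- int_dot m x))"

definition int_norm2 :: "int^'d::finite \<Rightarrow> real" where
  "int_norm2 m = (\<Sum>i\<in>UNIV. real_of_int (m $ i) ^ 2)"

definition H1_weight_sum :: "(real^'d::finite \<Rightarrow> complex) \<Rightarrow> int^'d \<Rightarrow> real" where
  "H1_weight_sum f m = (1 + int_norm2 m) * (cmod (fourier_coeff f m))\<^sup>2"

definition in_H1 :: "(real^'d::finite \<Rightarrow> complex) \<Rightarrow> bool" where
  "in_H1 f \<longleftrightarrow> periodic_fun f \<and> f \<in> borel_measurable (lebesgue_on torus_cube)
     \<and> integrable (lebesgue_on torus_cube) (\<lambda>x. (cmod (f x))\<^sup>2)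
     \<and> (H1_weight_sum f) summable_on UNIV"

definition H1_norm :: "(real^'d::finite \<Rightarrow> complex) \<Rightarrow> real" where
  "H1_norm f = sqrt (infsum (H1_weight_sum f) UNIV)"

definition fourier_Rn :: "(real^'n::finite \<Rightarrow> real) \<Rightarrow> real^'n \<Rightarrow> complex" where
  "fourier_Rn \<phi> \<xi> = integral\<^sup>L lborel (\<lambda>z. complex_of_real (\<phi> z) * cis (- (\<xi> \<bullet> z)))"

definition kappa :: "(real^'n::finite \<Rightarrow> real) \<Rightarrow> real" where
  "kappa \<sigma> = (2 * pi) powr (- real CARD('n)) *
     integral\<^sup>L lborel (\<lambda>\<xi>. (cmod (fourier_Rn \<sigma> \<xi>))\<^sup>2 / (norm \<xi>)\<^sup>2)"

end

theory Submission
  imports Defs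
begin

lemma inner_axis1: "(x::real^'d::finite) \<bullet> axis i 1 = x $ i"
  by (simp add: inner_axis)

lemma split_le:
  assumes "0 \<le> t" "t \<le> b"
  shows "cbox 0 ((\<chi> j. b)::real^'d::finite) \<inter> {x. x$i \<le> t} = cbox 0 (\<chi> j. if j = i then t else b)"
proof (intro set_eqI iffI)
  fix x :: "real^'d" assume "x \<in> cbox 0 (\<chi> j. b) \<inter> {x. x$i \<le> t}"
  thus "x \<in> cbox 0 (\<chi> j. if j = i then t else b)" by (auto simp: mem_box_cart)
next
  fix x :: "real^'d" assume x: "x \<in> cbox 0 (\<chi> j. if j = i then t else b)"
  have "0 \<le> x$j \<and> x$j \<le> b" for j
  proof (cases "j = i")
    case True thus ?thesis using x assms spec[OF x[unfolded mem_box_cart], of j] by auto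
  next
    case False thus ?thesis using spec[OF x[unfolded mem_box_cart], of j] by auto
  qed
  moreover have "x$i \<le> t" using spec[OF x[unfolded mem_box_cart], of i] by auto
  ultimately show "x \<in> cbox 0 (\<chi> j. b) \<inter> {x. x$i \<le> t}" by (auto simp: mem_box_cart)
qed

lemma split_ge:
  assumes "0 \<le> t" "t \<le> b"
  shows "cbox 0 ((\<chi> j. b)::real^'d::finite) \<inter> {x. x$i \<ge> t} = cbox (\<chi> j. if j = i then t else 0) (\<chi> j. b)"
proof (intro set_eqI iffI)
  fix x :: "real^'d" assume "x \<in> cbox 0 (\<chi> j. b) \<inter> {x. x$i \<ge> t}"
  thus "x \<in> cbox (\<chi> j. if j = i then t else 0) (\<chi> j. b)" by (auto simp: mem_box_cart)
next
  fix x :: "real^'d" assume x: "x \<in> cbox (\<chi> j. if j = i then t else 0) (\<chi> j. b)"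
  have "0 \<le> x$j \<and> x$j \<le> b" for j
  proof (cases "j = i")
    case True thus ?thesis using x assms spec[OF x[unfolded mem_box_cart], of j] by auto
  next
    case False thus ?thesis using spec[OF x[unfolded mem_box_cart], of j] by auto
  qed
  moreover have "x$i \<ge> t" using spec[OF x[unfolded mem_box_cart], of i] by auto
  ultimately show "x \<in> cbox 0 (\<chi> j. b) \<inter> {x. x$i \<ge> t}" by (auto simp: mem_box_cart)
qed

lemma transl1:
  fixes f :: "real^'d::finite \<Rightarrow> 'b::banach"
  assumes per: "\<And>x. f (x + (2*pi) *\<^sub>R axis i 1) = f x"
    and I: "(f has_integral I) (cbox 0 (\<chi> j. 2*pi))"
    and t: "0 \<le> t" "t \<le> 2*pi"
  shows "((\<lambda>x. f (x + t *\<^sub>R axis i 1)) has_integral I) (cbox 0 (\<chi> j. 2*pi))"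
proof -
  let ?T = "(\<chi> j. 2*pi) :: real^'d"
  let ?e = "axis i 1 :: real^'d"
  define P1 where "P1 = cbox (0::real^'d) (\<chi> j. if j = i then t else 2*pi)"
  define P2 where "P2 = cbox ((\<chi> j. if j = i then t else 0)::real^'d) ?T"
  have P1eq: "cbox 0 ?T \<inter> {x. x$i \<le> t} = P1"
    unfolding P1_def using split_le[OF t] .
  have P2eq: "cbox 0 ?T \<inter> {x. x$i \<ge> t} = P2"
    unfolding P2_def using split_ge[OF t] .
  have sub1: "P1 \<subseteq> cbox 0 ?T" using P1eq by blast
  have sub2: "P2 \<subseteq> cbox 0 ?T" using P2eq by blast
  have fint: "f integrable_on cbox 0 ?T" using I by blast
  obtain I1 where I1: "(f has_integral I1) P1"
    using integrable_on_subcbox[OF fint sub1[unfolded P1_def]] P1_def by blast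
  obtain I2 where I2: "(f has_integral I2) P2"
    using integrable_on_subcbox[OF fint sub2[unfolded P2_def]] P2_def by blast
  have ebasis: "?e \<in> Basis" by simp
  have "(f has_integral (I1 + I2)) (cbox 0 ?T)"
    by (rule has_integral_split[where k="?e" and c=t, OF _ _ ebasis])
       (use I1 I2 P1eq P2eq in \<open>simp_all add: inner_axis1\<close>)
  hence II: "I = I1 + I2" using I has_integral_unique by blast
  define Q1 where "Q1 = cbox (0::real^'d) (\<chi> j. if j = i then 2*pi - t else 2*pi)"
  define Q2 where "Q2 = cbox ((\<chi> j. if j = i then 2*pi - t else 0)::real^'d) ?T"
  have Q1eq: "cbox 0 ?T \<inter> {x. x$i \<le> 2*pi - t} = Q1"
    unfolding Q1_def using split_le[of "2*pi-t" "2*pi"] t by simp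
  have Q2eq: "cbox 0 ?T \<inter> {x. x$i \<ge> 2*pi - t} = Q2"
    unfolding Q2_def using split_ge[of "2*pi-t" "2*pi"] t by simp
  have A1: "(f has_integral I2) (cbox (0 + t *\<^sub>R ?e) ((\<chi> j. if j = i then 2*pi - t else 2*pi) + t *\<^sub>R ?e))"
  proof -
    have "0 + t *\<^sub>R ?e = (\<chi> j. if j = i then t else 0)"
      by (simp add: vec_eq_iff axis_def)
    moreover have "(\<chi> j. if j = i then 2*pi - t else 2*pi) + t *\<^sub>R ?e = ?T"
      by (simp add: vec_eq_iff axis_def)
    ultimately show ?thesis using I2 P2_def by simp
  qed
  have B1: "((\<lambda>x. f (x + t *\<^sub>R ?e)) has_integral I2) Q1"
    using A1[folded has_integral_shift_cbox_iff] unfolding Q1_def o_def by (simp add: add.commute)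
  have A2: "(f has_integral I1) (cbox ((\<chi> j. if j = i then 2*pi - t else 0) + (t - 2*pi) *\<^sub>R ?e) (?T + (t - 2*pi) *\<^sub>R ?e))"
  proof -
    have "(\<chi> j. if j = i then 2*pi - t else 0) + (t - 2*pi) *\<^sub>R ?e = (0::real^'d)"
      by (simp add: vec_eq_iff axis_def)
    moreover have "?T + (t - 2*pi) *\<^sub>R ?e = (\<chi> j. if j = i then t else 2*pi)"
      by (simp add: vec_eq_iff axis_def)
    ultimately show ?thesis using I1 P1_def by simp
  qed
  have B2': "((\<lambda>x. f (x + (t - 2*pi) *\<^sub>R ?e)) has_integral I1) Q2"
    using A2[folded has_integral_shift_cbox_iff] unfolding Q2_def o_def by (simp add: add.commute)
  have "f (x + (t - 2*pi) *\<^sub>R ?e) = f (x + t *\<^sub>R ?e)" for x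
  proof -
    have "f (x + (t - 2*pi) *\<^sub>R ?e) = f ((x + (t - 2*pi) *\<^sub>R ?e) + (2*pi) *\<^sub>R ?e)"
      using per by simp
    also have "(x + (t - 2*pi) *\<^sub>R ?e) + (2*pi) *\<^sub>R ?e = x + t *\<^sub>R ?e"
      by (simp add: algebra_simps)
    finally show ?thesis .
  qed
  hence B2: "((\<lambda>x. f (x + t *\<^sub>R ?e)) has_integral I1) Q2" using B2' by simp
  have "((\<lambda>x. f (x + t *\<^sub>R ?e)) has_integral (I2 + I1)) (cbox 0 ?T)"
    by (rule has_integral_split[where k="?e" and c="2*pi - t", OF _ _ ebasis])
       (use B1 B2 Q1eq Q2eq in \<open>simp_all add: inner_axis1\<close>)
  thus ?thesis using II by (simp add: add.commute)
qed

lemma per_nat: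
  assumes per: "periodic_fun f"
  shows "f (x + (2*pi*real n) *\<^sub>R axis i 1) = f x"
proof (induction n arbitrary: x)
  case 0 then show ?case by simp
next
  case (Suc n)
  have "f (x + (2*pi*real (Suc n)) *\<^sub>R axis i 1) = f ((x + (2*pi*real n) *\<^sub>R axis i 1) + (2*pi) *\<^sub>R axis i 1)"
    by (rule arg_cong[where f=f]) (simp add: algebra_simps)
  also have "\<dots> = f (x + (2*pi*real n) *\<^sub>R axis i 1)"
    by (rule per[unfolded periodic_fun_def, rule_format])
  also have "\<dots> = f x" by (rule Suc.IH)
  finally show ?case .
qed

lemma per_int:
  assumes per: "periodic_fun f"
  shows "f (x + (2*pi*real_of_int k) *\<^sub>R axis i 1) = f x"
proof (cases "k \<ge> 0")
  case True
  obtain n where "k = int n" using True by (intro that[of "nat k"]) auto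
  then show ?thesis using per_nat[OF per] by simp
next
  case False
  obtain n where n: "k = - int n" using False by (intro that[of "nat (-k)"]) auto
  have "f x = f ((x + (2*pi*real_of_int k) *\<^sub>R axis i 1) + (2*pi*real n) *\<^sub>R axis i 1)"
    using n by (simp add: algebra_simps)
  also have "\<dots> = f (x + (2*pi*real_of_int k) *\<^sub>R axis i 1)" using per_nat[OF per] by simp
  finally show ?thesis by simp
qed

lemma per_real_shift:
  assumes per: "periodic_fun f"
  shows "f (x + t *\<^sub>R axis i 1) = f (x + (t - 2*pi*real_of_int \<lfloor>t/(2*pi)\<rfloor>) *\<^sub>R axis i 1)"
proof -
  have "f (x + (t - 2*pi*real_of_int \<lfloor>t/(2*pi)\<rfloor>) *\<^sub>R axis i 1) =
        f ((x + (t - 2*pi*real_of_int \<lfloor>t/(2*pi)\<rfloor>) *\<^sub>R axis i 1) + (2*pi*real_of_int \<lfloor>t/(2*pi)\<rfloor>) *\<^sub>R axis i 1)"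
    using per_int[OF per] by simp
  also have "(x + (t - 2*pi*real_of_int \<lfloor>t/(2*pi)\<rfloor>) *\<^sub>R axis i 1) + (2*pi*real_of_int \<lfloor>t/(2*pi)\<rfloor>) *\<^sub>R axis i 1
     = x + t *\<^sub>R axis i 1" by (simp add: algebra_simps)
  finally show ?thesis by simp
qed

lemma floor_red_bounds:
  fixes t :: real
  shows "0 \<le> t - 2*pi*real_of_int \<lfloor>t/(2*pi)\<rfloor>" "t - 2*pi*real_of_int \<lfloor>t/(2*pi)\<rfloor> \<le> 2*pi"
proof -
  have p: "2*pi > 0" by simp
  have "real_of_int \<lfloor>t/(2*pi)\<rfloor> * (2*pi) \<le> t/(2*pi) * (2*pi)"
    by (rule mult_right_mono) auto
  hence "2*pi*real_of_int \<lfloor>t/(2*pi)\<rfloor> \<le> t" using p by (simp add: mult.commute)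
  thus "0 \<le> t - 2*pi*real_of_int \<lfloor>t/(2*pi)\<rfloor>" by simp
  have "t/(2*pi) * (2*pi) \<le> (real_of_int \<lfloor>t/(2*pi)\<rfloor> + 1) * (2*pi)"
    using pi_gt_zero by (intro mult_right_mono) linarith+
  hence "t \<le> 2*pi*real_of_int \<lfloor>t/(2*pi)\<rfloor> + 2*pi" using p by (simp add: algebra_simps)
  thus "t - 2*pi*real_of_int \<lfloor>t/(2*pi)\<rfloor> \<le> 2*pi" by simp
qed

lemma transl_coord:
  fixes f :: "real^'d::finite \<Rightarrow> 'b::banach"
  assumes per: "periodic_fun f"
    and I: "(f has_integral I) (cbox 0 (\<chi> j. 2*pi))"
  shows "((\<lambda>x. f (x + t *\<^sub>R axis i 1)) has_integral I) (cbox 0 (\<chi> j. 2*pi))"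
proof -
  have "((\<lambda>x. f (x + (t - 2*pi*real_of_int \<lfloor>t/(2*pi)\<rfloor>) *\<^sub>R axis i 1)) has_integral I) (cbox 0 (\<chi> j. 2*pi))"
    using transl1[OF _ I floor_red_bounds(1)[of t] floor_red_bounds(2)[of t], of i] per
    unfolding periodic_fun_def by blast
  then show ?thesis using per_real_shift[OF per] by simp
qed

lemma periodic_shift:
  assumes "periodic_fun f" shows "periodic_fun (\<lambda>x. f (x + c))"
  unfolding periodic_fun_def
proof (intro allI)
  fix x i
  have eq: "x + (2*pi) *\<^sub>R axis i 1 + c = (x + c) + (2*pi) *\<^sub>R axis i 1" by (simp add: algebra_simps)
  show "f (x + (2*pi) *\<^sub>R axis i 1 + c) = f (x + c)"
    by (subst eq) (rule assms[unfolded periodic_fun_def, rule_format])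
qed

lemma transl_general_aux:
  assumes "finite (S::'d::finite set)"
  shows "\<forall>c (f::real^'d \<Rightarrow> 'b::banach) I. (\<forall>j. j \<notin> S \<longrightarrow> c $ j = 0) \<longrightarrow> periodic_fun f \<longrightarrow>
     (f has_integral I) (cbox 0 (\<chi> j. 2*pi)) \<longrightarrow>
     ((\<lambda>x. f (x + c)) has_integral I) (cbox 0 ((\<chi> j. 2*pi)::real^'d))"
  using assms
proof (induction S)
  case empty
  show ?case
  proof (intro allI impI)
    fix c :: "real^'d" and f :: "real^'d \<Rightarrow> 'b" and I
    assume c0: "\<forall>j. j \<notin> {} \<longrightarrow> c $ j = 0" and "periodic_fun f" and fI: "(f has_integral I) (cbox 0 (\<chi> j. 2*pi))"
    have "c = 0" using c0 by (simp add: vec_eq_iff)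
    with fI show "((\<lambda>x. f (x + c)) has_integral I) (cbox 0 (\<chi> j. 2*pi))" by simp
  qed
next
  case (insert i S)
  show ?case
  proof (intro allI impI)
    fix c :: "real^'d" and f :: "real^'d \<Rightarrow> 'b" and I
    assume c: "\<forall>j. j \<notin> insert i S \<longrightarrow> c $ j = 0" and per: "periodic_fun f"
      and I: "(f has_integral I) (cbox 0 (\<chi> j. 2*pi))"
    define c' where "c' = c - (c$i) *\<^sub>R axis i 1"
    have c': "\<forall>j. j \<notin> S \<longrightarrow> c' $ j = 0"
      using c insert.hyps unfolding c'_def by (auto simp: axis_def)
    define g where "g = (\<lambda>x. f (x + (c$i) *\<^sub>R axis i 1))"
    have g: "(g has_integral I) (cbox 0 (\<chi> j. 2*pi))"
      unfolding g_def by (rule transl_coord[OF per I])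
    have pg: "periodic_fun g" unfolding g_def by (rule periodic_shift[OF per])
    have "((\<lambda>x. g (x + c')) has_integral I) (cbox 0 (\<chi> j. 2*pi))"
      using insert.IH c' pg g by blast
    moreover have "g (x + c') = f (x + c)" for x
      unfolding g_def c'_def by (simp add: algebra_simps)
    ultimately show "((\<lambda>x. f (x + c)) has_integral I) (cbox 0 (\<chi> j. 2*pi))" by simp
  qed
qed

lemma transl_general:
  fixes f :: "real^'d::finite \<Rightarrow> 'b::banach"
  assumes "periodic_fun f" "(f has_integral I) (cbox 0 (\<chi> j. 2*pi))"
  shows "((\<lambda>x. f (x + c)) has_integral I) (cbox 0 (\<chi> j. 2*pi))"
  using transl_general_aux[of "UNIV::'d set"] assms by auto

lemma reflect_general:
  fixes f :: "real^'d::finite \<Rightarrow> 'b::banach"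
  assumes per: "periodic_fun f" and I: "(f has_integral I) (cbox 0 (\<chi> j. 2*pi))"
  shows "((\<lambda>x. f (- x)) has_integral I) (cbox 0 (\<chi> j. 2*pi))"
proof -
  let ?T = "(\<chi> j. 2*pi) :: real^'d"
  have "((\<lambda>x. f ((-1) *\<^sub>R x + 0)) has_integral (1 / (\<bar>-1\<bar> ^ DIM(real^'d))) *\<^sub>R I)
          ((\<lambda>x. (1 / (-1)) *\<^sub>R x + -((1 / (-1)) *\<^sub>R 0)) ` cbox 0 ?T)"
    by (rule has_integral_affinity[OF I]) simp
  hence A: "((\<lambda>x. f (- x)) has_integral I) (cbox (-?T) 0)"
    by (simp add: uminus_interval_vector)
  define g where "g = (\<lambda>x. f (- x))"
  have pg: "periodic_fun g"
    unfolding periodic_fun_def g_def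
  proof (intro allI)
    fix x :: "real^'d" and i
    have "f (- x) = f ((- (x + (2*pi) *\<^sub>R axis i 1)) + (2*pi) *\<^sub>R axis i 1)" by simp
    also have "\<dots> = f (- (x + (2*pi) *\<^sub>R axis i 1))" using per unfolding periodic_fun_def by blast
    finally show "f (- (x + (2*pi) *\<^sub>R axis i 1)) = f (- x)" by simp
  qed
  have "((g \<circ> (+) (-?T)) has_integral I) (cbox 0 ?T)"
    using A unfolding g_def by (subst has_integral_shift_cbox_iff) simp
  hence B: "((\<lambda>x. g (x + (-?T))) has_integral I) (cbox 0 ?T)" by (simp add: o_def add.commute)
  have "((\<lambda>x. g ((x + ?T) + (-?T))) has_integral I) (cbox 0 ?T)"
    by (rule transl_general[OF periodic_shift[OF pg] B])
  then show ?thesis unfolding g_def by simp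
qed

lemma cube_eq: "torus_cube = cbox (0::real^'d::finite) (\<chi> j. 2*pi)"
  by (auto simp: torus_cube_def mem_box_cart)

lemma cube_sets: "torus_cube \<in> sets lebesgue"
  unfolding cube_eq by (simp add: fmeasurableD lmeasurable_cbox)

lemma fin_M: "finite_measure (lebesgue_on torus_cube)"
  unfolding cube_eq by (rule finite_measure_lebesgue_on[OF lmeasurable_cbox])

lemma borel_on: "h \<in> borel_measurable borel \<Longrightarrow> h \<in> borel_measurable (lebesgue_on S)"
  using measurable_comp[OF id_borel_measurable_lebesgue_on, of h borel S] by (simp add: comp_def)

lemma bnd_int:
  fixes h :: "real^'d::finite \<Rightarrow> 'b::{banach,second_countable_topology}"
  assumes "h \<in> borel_measurable (lebesgue_on torus_cube)" "\<And>x. norm (h x) \<le> B"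
  shows "integrable (lebesgue_on torus_cube) h"
  by (rule finite_measure.integrable_const_bound[OF fin_M]) (use assms in auto)

lemma borel_shift:
  fixes h :: "real^'d::finite \<Rightarrow> 'b::topological_space"
  assumes [measurable]: "h \<in> borel_measurable borel"
  shows "(\<lambda>x. h (x + c)) \<in> borel_measurable borel"
proof -
  have [measurable]: "(\<lambda>x. x + c) \<in> borel_measurable borel"
    by (intro borel_measurable_continuous_onI continuous_intros)
  show ?thesis by measurable
qed

lemma borel_neg:
  fixes h :: "real^'d::finite \<Rightarrow> 'b::topological_space"
  assumes [measurable]: "h \<in> borel_measurable borel"
  shows "(\<lambda>x. h (- x)) \<in> borel_measurable borel"
proof -
  have [measurable]: "(\<lambda>x::real^'d. - x) \<in> borel_measurable borel"
    by (intro borel_measurable_continuous_onI continuous_on_minus continuous_on_id)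
  show ?thesis by measurable
qed

lemma torus_hk:
  fixes h :: "real^'d::finite \<Rightarrow> 'b::euclidean_space"
  assumes "integrable (lebesgue_on torus_cube) h"
  shows "(h has_integral torus_integral h) (cbox 0 (\<chi> j. 2*pi))"
  using has_integral_integral_lebesgue_on[OF assms cube_sets] unfolding torus_integral_def cube_eq .

lemma torus_translate:
  fixes h :: "real^'d::finite \<Rightarrow> 'b::euclidean_space"
  assumes per: "periodic_fun h" and hm: "h \<in> borel_measurable borel" and hb: "\<And>x. norm (h x) \<le> B"
  shows "torus_integral (\<lambda>x. h (x + c)) = torus_integral h"
proof -
  have i1: "integrable (lebesgue_on torus_cube) h"
    by (rule bnd_int[OF borel_on[OF hm] hb])
  have i2: "integrable (lebesgue_on torus_cube) (\<lambda>x. h (x + c))"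
    by (rule bnd_int[OF borel_on[OF borel_shift[OF hm]] hb])
  have "((\<lambda>x. h (x + c)) has_integral torus_integral h) (cbox 0 (\<chi> j. 2*pi))"
    by (rule transl_general[OF per torus_hk[OF i1]])
  then show ?thesis using torus_hk[OF i2] has_integral_unique by blast
qed

lemma torus_reflect:
  fixes h :: "real^'d::finite \<Rightarrow> 'b::euclidean_space"
  assumes per: "periodic_fun h" and hm: "h \<in> borel_measurable borel" and hb: "\<And>x. norm (h x) \<le> B"
  shows "torus_integral (\<lambda>x. h (- x)) = torus_integral h"
proof -
  have i1: "integrable (lebesgue_on torus_cube) h"
    by (rule bnd_int[OF borel_on[OF hm] hb])
  have i2: "integrable (lebesgue_on torus_cube) (\<lambda>x. h (- x))"
    by (rule bnd_int[OF borel_on[OF borel_neg[OF hm]] hb])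
  have "((\<lambda>x. h (- x)) has_integral torus_integral h) (cbox 0 (\<chi> j. 2*pi))"
    by (rule reflect_general[OF per torus_hk[OF i1]])
  then show ?thesis using torus_hk[OF i2] has_integral_unique by blast
qed

lemma int_dot_diff: "int_dot m (x - y) = int_dot m x - int_dot m y"
  unfolding int_dot_def by (simp add: sum_subtractf algebra_simps)

lemma int_dot_add: "int_dot m (x + y) = int_dot m x + int_dot m y"
  unfolding int_dot_def by (simp add: sum.distrib algebra_simps)

lemma int_dot_axis: "int_dot m ((2*pi) *\<^sub>R axis i 1) = 2*pi* of_int (m$i)"
proof -
  have "int_dot m ((2*pi) *\<^sub>R axis i 1) = (\<Sum>j\<in>UNIV. if j = i then of_int (m$i) * (2*pi) else 0)"
    unfolding int_dot_def by (intro sum.cong) (auto simp: axis_def)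
  also have "\<dots> = 2*pi* of_int (m$i)" by simp
  finally show ?thesis .
qed

lemma int_dot_neg: "int_dot (-m) x = - int_dot m x"
  unfolding int_dot_def by (simp add: sum_negf)

lemma int_dot_neg2: "int_dot m (-x) = - int_dot m x"
  unfolding int_dot_def by (simp add: sum_negf)

lemma int_dot_zero[simp]: "int_dot 0 x = 0"
  unfolding int_dot_def by simp

lemma cis_int_dot_per: "cis (- int_dot m (x + (2*pi) *\<^sub>R axis i 1)) = cis (- int_dot m x)"
proof -
  have h1: "int_dot m (x + (2*pi) *\<^sub>R axis i 1) = int_dot m x + 2*pi * of_int (m$i)"
    using int_dot_add[of m x] int_dot_axis[of m i] by simp
  have "cis (- int_dot m (x + (2*pi) *\<^sub>R axis i 1)) = cis (- int_dot m x + 2*pi * of_int (-(m$i)))"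
    by (rule arg_cong[where f=cis]) (simp add: h1)
  also have "\<dots> = cis (- int_dot m x) * cis (2*pi * of_int (-(m$i)))"
    by (rule cis_mult[symmetric])
  also have "cis (2*pi * of_int (-(m$i))) = 1" by (rule cis_multiple_2pi) (rule Ints_of_int)
  finally show ?thesis by simp
qed

lemma cont_int_dot: "continuous_on UNIV (int_dot m)"
  unfolding int_dot_def[abs_def]
  by (intro continuous_on_sum continuous_on_mult continuous_on_const continuous_on_component continuous_on_id)

lemma borel_e[measurable]: "(\<lambda>x. cis (- int_dot m x)) \<in> borel_measurable borel"
  by (intro borel_measurable_continuous_onI continuous_on_cis continuous_on_minus cont_int_dot)

lemma e_split: "cis (- int_dot m x) = cis (- int_dot m y) * cis (- int_dot m (x - y))"
  by (simp add: int_dot_diff cis_mult)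

lemma pow_c: "complex_of_real ((2 * pi) powr - real CARD('d)) * of_real ((2*pi)^CARD('d)) = 1"
proof -
  have "(2 * pi) powr - real CARD('d) * (2*pi)^CARD('d) = (2 * pi) powr - real CARD('d) * (2*pi) powr real CARD('d)"
    by (simp add: powr_realpow)
  also have "\<dots> = 1" by (simp add: powr_add[symmetric])
  finally have "(2 * pi) powr - real CARD('d) * (2*pi)^CARD('d) = 1" .
  then show ?thesis by (metis of_real_1 of_real_mult)
qed

lemma borel_refl_shift:
  fixes K :: "real^'d::finite \<Rightarrow> 'b::topological_space"
  assumes [measurable]: "K \<in> borel_measurable borel"
  shows "(\<lambda>y. K (x - y)) \<in> borel_measurable borel"
proof -
  have [measurable]: "(\<lambda>y::real^'d. x - y) \<in> borel_measurable borel"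
    by (intro borel_measurable_continuous_onI continuous_on_diff continuous_on_const continuous_on_id)
  show ?thesis by measurable
qed

lemma conv_fourier:
  fixes K g :: "real^'d::finite \<Rightarrow> real"
  assumes Km[measurable]: "K \<in> borel_measurable borel" and Kb: "\<And>x. \<bar>K x\<bar> \<le> B" and Kp: "periodic_fun K"
    and gm[measurable]: "g \<in> borel_measurable (lebesgue_on torus_cube)"
    and gi: "integrable (lebesgue_on torus_cube) g"
  shows "fourier_coeff (\<lambda>x. complex_of_real (torus_conv K g x)) m =
     of_real ((2*pi)^CARD('d)) * fourier_coeff (\<lambda>x. complex_of_real (K x)) m * fourier_coeff (\<lambda>x. complex_of_real (g x)) m"
proof -
  let ?M = "lebesgue_on (torus_cube::(real^'d) set)"
  define e where "e = (\<lambda>x::real^'d. cis (- int_dot m x))"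
  have finM: "finite_measure ?M" by (rule fin_M)
  interpret P: pair_sigma_finite ?M ?M using finM by (simp add: finite_measure_def pair_sigma_finite_def)
  have fstm[measurable]: "fst \<in> borel_measurable (?M \<Otimes>\<^sub>M ?M)"
    using measurable_comp[OF measurable_fst id_borel_measurable_lebesgue_on] by (simp add: comp_def)
  have sndm[measurable]: "snd \<in> borel_measurable (?M \<Otimes>\<^sub>M ?M)"
    using measurable_comp[OF measurable_snd id_borel_measurable_lebesgue_on] by (simp add: comp_def)
  have em[measurable]: "e \<in> borel_measurable borel" unfolding e_def by (rule borel_e)
  have B0: "B \<ge> 0" using Kb[of 0] by simp
  define F where "F = (\<lambda>x y. complex_of_real (K (x - y) * g y) * e x)"
  have Km2: "(\<lambda>p. K (fst p - snd p)) \<in> borel_measurable (?M \<Otimes>\<^sub>M ?M)"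
    by measurable
  have gm2: "(\<lambda>p. g (snd p)) \<in> borel_measurable (?M \<Otimes>\<^sub>M ?M)"
    by measurable
  have em2: "(\<lambda>p. e (fst p)) \<in> borel_measurable (?M \<Otimes>\<^sub>M ?M)"
    by measurable
  have Fm: "case_prod F \<in> borel_measurable (?M \<Otimes>\<^sub>M ?M)"
    using Km2 gm2 em2 unfolding F_def split_beta' by measurable
  have normF: "norm (F x y) \<le> B * \<bar>g y\<bar>" for x y
  proof -
    have "norm (F x y) = \<bar>K (x - y)\<bar> * \<bar>g y\<bar>" unfolding F_def e_def by (simp add: norm_mult abs_mult)
    also have "\<dots> \<le> B * \<bar>g y\<bar>" by (rule mult_right_mono[OF Kb]) simp
    finally show ?thesis .
  qed
  have gabs: "integrable ?M (\<lambda>y. B * \<bar>g y\<bar>)" using gi by simp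
  have Fxm: "(\<lambda>y. F x y) \<in> borel_measurable ?M" for x
  proof -
    have [measurable]: "(\<lambda>y. K (x - y)) \<in> borel_measurable ?M"
      by (rule borel_on[OF borel_refl_shift[OF Km]])
    show ?thesis unfolding F_def by measurable
  qed
  have Fxi: "integrable ?M (\<lambda>y. F x y)" for x
    by (rule Bochner_Integration.integrable_bound[OF gabs Fxm]) (use normF B0 in \<open>auto simp: abs_mult\<close>)
  have Fint: "integrable (?M \<Otimes>\<^sub>M ?M) (case_prod F)"
  proof (rule P.Fubini_integrable[OF Fm])
    show "AE x in ?M. integrable ?M (\<lambda>y. case_prod F (x, y))" using Fxi by simp
    have meas: "(\<lambda>x. \<integral>y. norm (case_prod F (x, y)) \<partial>?M) \<in> borel_measurable ?M"
      using Fm by measurable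
    show "integrable ?M (\<lambda>x. \<integral>y. norm (case_prod F (x, y)) \<partial>?M)"
    proof (rule finite_measure.integrable_const_bound[OF fin_M _ meas])
      show "AE x in ?M. norm (\<integral>y. norm (case_prod F (x, y)) \<partial>?M) \<le> (\<integral>y. B * \<bar>g y\<bar> \<partial>?M)"
      proof (intro AE_I2)
        fix x
        have "norm (\<integral>y. norm (case_prod F (x, y)) \<partial>?M) = (\<integral>y. norm (F x y) \<partial>?M)"
          by (simp add: integral_nonneg_AE)
        also have "\<dots> \<le> (\<integral>y. B * \<bar>g y\<bar> \<partial>?M)"
          by (rule integral_mono[OF _ gabs normF]) (use Fxi in simp)
        finally show "norm (\<integral>y. norm (case_prod F (x, y)) \<partial>?M) \<le> (\<integral>y. B * \<bar>g y\<bar> \<partial>?M)" .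
      qed
    qed
  qed
  define J where "J = torus_integral (\<lambda>u. complex_of_real (K u) * e u)"
  define G where "G = torus_integral (\<lambda>y. complex_of_real (g y) * e y)"
  have step1: "torus_integral (\<lambda>x. complex_of_real (torus_conv K g x) * e x) = (\<integral>x. \<integral>y. F x y \<partial>?M \<partial>?M)"
  proof -
    have "complex_of_real (torus_conv K g x) * e x = (\<integral>y. F x y \<partial>?M)" for x
      unfolding F_def torus_conv_def torus_integral_def by (simp del: of_real_mult)
    then show ?thesis unfolding torus_integral_def by simp
  qed
  have step2: "(\<integral>x. \<integral>y. F x y \<partial>?M \<partial>?M) = (\<integral>y. \<integral>x. F x y \<partial>?M \<partial>?M)"
    using P.Fubini_integral[OF Fint] by simp
  have hper: "periodic_fun (\<lambda>u. complex_of_real (K u) * e u)"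
    using Kp unfolding periodic_fun_def e_def by (simp add: cis_int_dot_per)
  have hm: "(\<lambda>u. complex_of_real (K u) * e u) \<in> borel_measurable borel" by measurable
  have hb: "norm (complex_of_real (K u) * e u) \<le> B" for u
    using Kb[of u] unfolding e_def by (simp add: norm_mult)
  have step3: "(\<integral>x. F x y \<partial>?M) = complex_of_real (g y) * e y * J" for y
  proof -
    have "F x y = (complex_of_real (g y) * e y) * ((\<lambda>u. complex_of_real (K u) * e u) (x + (- y)))" for x
      unfolding F_def e_def using e_split[of m x y] by (simp add: mult_ac)
    hence "(\<integral>x. F x y \<partial>?M) = (complex_of_real (g y) * e y) * torus_integral (\<lambda>x. (\<lambda>u. complex_of_real (K u) * e u) (x + (- y)))"
      unfolding torus_integral_def by simp
    also have "torus_integral (\<lambda>x. (\<lambda>u. complex_of_real (K u) * e u) (x + (- y))) = J"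
      unfolding J_def by (rule torus_translate[OF hper hm hb])
    finally show ?thesis .
  qed
  have step4: "(\<integral>y. \<integral>x. F x y \<partial>?M \<partial>?M) = G * J"
    unfolding step3 G_def torus_integral_def by simp
  have L: "fourier_coeff (\<lambda>x. complex_of_real (torus_conv K g x)) m = complex_of_real ((2 * pi) powr - real CARD('d)) * (G * J)"
    unfolding fourier_coeff_def using step1 step2 step4 e_def by simp
  have R: "of_real ((2*pi)^CARD('d)) * fourier_coeff (\<lambda>x. complex_of_real (K x)) m * fourier_coeff (\<lambda>x. complex_of_real (g x)) m
     = (complex_of_real ((2 * pi) powr - real CARD('d)) * of_real ((2*pi)^CARD('d))) * (complex_of_real ((2 * pi) powr - real CARD('d)) * (G * J))"
    unfolding fourier_coeff_def J_def G_def e_def by (simp add: mult_ac)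
  show ?thesis unfolding L R pow_c by simp
qed

lemma per_vec_aux:
  assumes per: "periodic_fun f" and fin: "finite (S::'d::finite set)"
  shows "\<forall>x. f (x + (\<chi> i. if i \<in> S then 2*pi* of_int (k i) else 0)) = f x"
  using fin
proof (induction S)
  case empty
  have "(\<chi> i. if i \<in> {} then 2*pi* of_int (k i) else 0) = (0::real^'d)" by (simp add: vec_eq_iff)
  then show ?case by simp
next
  case (insert j S)
  show ?case
  proof
    fix x :: "real^'d"
    have v: "(\<chi> i. if i \<in> insert j S then 2*pi* of_int (k i) else 0) =
          (\<chi> i. if i \<in> S then 2*pi* of_int (k i) else 0) + (2*pi*real_of_int (k j)) *\<^sub>R axis j 1"
      using insert.hyps by (auto simp: vec_eq_iff axis_def)
    have "f (x + (\<chi> i. if i \<in> insert j S then 2*pi* of_int (k i) else 0)) =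
          f ((x + (\<chi> i. if i \<in> S then 2*pi* of_int (k i) else 0)) + (2*pi*real_of_int (k j)) *\<^sub>R axis j 1)"
      unfolding v by (simp add: add.assoc)
    also have "\<dots> = f (x + (\<chi> i. if i \<in> S then 2*pi* of_int (k i) else 0))"
      by (rule per_int[OF per])
    also have "\<dots> = f x" using insert.IH by blast
    finally show "f (x + (\<chi> i. if i \<in> insert j S then 2*pi* of_int (k i) else 0)) = f x" .
  qed
qed

lemma per_vec:
  fixes x :: "real^'d::finite"
  assumes per: "periodic_fun f"
  shows "f (x + (\<chi> i. 2*pi* of_int (k i))) = f x"
  using per_vec_aux[OF per, of "UNIV::'d set" k] by simp

lemma per_red:
  fixes x :: "real^'d::finite"
  assumes per: "periodic_fun f"
  shows "f (x - (\<chi> i. 2*pi* of_int (k i))) = f x"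
  using per_vec[OF per, of "x - (\<chi> i. 2*pi* of_int (k i))" k] by simp

lemma reduce_ex:
  fixes x :: "real^'d::finite"
  shows "\<exists>k::'d\<Rightarrow>int. \<forall>i. - pi < (x - (\<chi> i. 2*pi* of_int (k i)))$i \<and> (x - (\<chi> i. 2*pi* of_int (k i)))$i \<le> pi"
proof (intro exI allI)
  fix i
  let ?a = "(x$i - pi)/(2*pi)"
  have p: "2*pi > 0" by simp
  have c1: "?a \<le> of_int \<lceil>?a\<rceil>" by simp
  have c2: "of_int \<lceil>?a\<rceil> < ?a + 1" by linarith
  have "?a * (2*pi) \<le> of_int \<lceil>?a\<rceil> * (2*pi)" by (rule mult_right_mono[OF c1]) simp
  hence h1: "x$i - pi \<le> 2*pi* of_int \<lceil>?a\<rceil>" using p by (simp add: mult.commute)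
  have lt: "of_int \<lceil>?a\<rceil> * (2*pi) < (?a + 1) * (2*pi)" by (rule mult_strict_right_mono[OF c2 p])
  have eq: "(?a + 1) * (2*pi) = x$i + pi" using p by (simp add: field_simps)
  have h2: "2*pi* of_int \<lceil>?a\<rceil> < x$i + pi" using lt unfolding eq by (simp add: mult.commute)
  show "- pi < (x - (\<chi> i. 2*pi* of_int \<lceil>(x$i - pi)/(2*pi)\<rceil>))$i \<and> (x - (\<chi> i. 2*pi* of_int \<lceil>(x$i - pi)/(2*pi)\<rceil>))$i \<le> pi"
    using h1 h2 by simp
qed

lemma bounded_per:
  fixes f :: "real^'d::finite \<Rightarrow> real"
  assumes per: "periodic_fun f" and cont: "continuous_on UNIV f"
  shows "\<exists>B. \<forall>x. \<bar>f x\<bar> \<le> B"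
proof -
  let ?S = "cbox (-(\<chi> i. pi)) ((\<chi> i. pi)::real^'d)"
  have "compact (f ` ?S)"
    by (rule compact_continuous_image[OF continuous_on_subset[OF cont] compact_cbox]) simp
  then obtain B where B: "\<forall>y\<in>f ` ?S. norm y \<le> B" using compact_imp_bounded bounded_iff by metis
  have "\<bar>f x\<bar> \<le> B" for x
  proof -
    obtain k where k: "\<forall>i. - pi < (x - (\<chi> i. 2*pi* of_int (k i)))$i \<and> (x - (\<chi> i. 2*pi* of_int (k i)))$i \<le> pi"
      using reduce_ex by blast
    have "x - (\<chi> i. 2*pi* of_int (k i)) \<in> ?S" using k by (auto simp: mem_box_cart less_imp_le)
    hence "\<bar>f (x - (\<chi> i. 2*pi* of_int (k i)))\<bar> \<le> B" using B by auto
    thus ?thesis using per_red[OF per] by simp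
  qed
  thus ?thesis by blast
qed

lemma abs_red_eq:
  fixes y z xi :: real and k k' :: int
  assumes y: "y = xi - 2*pi* of_int k" and z: "z = - xi - 2*pi* of_int k'"
    and yb: "- pi < y" "y \<le> pi" and zb: "- pi < z" "z \<le> pi"
  shows "\<bar>y\<bar> = \<bar>z\<bar>"
proof -
  define s where "s = k + k'"
  have sum: "y + z = - 2*pi* of_int s" unfolding s_def using y z by (simp add: algebra_simps)
  have "pi * of_int s < pi * 1" using sum yb zb by linarith
  hence "of_int s < (1::real)" using pi_gt_zero mult_less_cancel_left_pos by blast
  hence s1: "s \<le> 0" by linarith
  have "pi * (-1) \<le> pi * of_int s" using sum yb zb by linarith
  hence "(-1::real) \<le> of_int s" using pi_gt_zero mult_le_cancel_left_pos by blast
  hence s2: "s \<ge> -1" by linarith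
  show ?thesis
  proof (cases "s = 0")
    case True then show ?thesis using sum by simp
  next
    case False
    hence "s = -1" using s1 s2 by simp
    hence "y + z = 2*pi" using sum by simp
    hence "y = pi" "z = pi" using yb zb by linarith+
    thus ?thesis by simp
  qed
qed

lemma even_radial:
  fixes f :: "real^'d::finite \<Rightarrow> real"
  assumes per: "periodic_fun f" and rad: "torus_radial f"
  shows "f (- x) = f x"
proof -
  obtain k where k: "\<forall>i. - pi < (x - (\<chi> i. 2*pi* of_int (k i)))$i \<and> (x - (\<chi> i. 2*pi* of_int (k i)))$i \<le> pi"
    using reduce_ex by blast
  obtain k' where k': "\<forall>i. - pi < (-x - (\<chi> i. 2*pi* of_int (k' i)))$i \<and> (-x - (\<chi> i. 2*pi* of_int (k' i)))$i \<le> pi"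
    using reduce_ex by blast
  define y where "y = x - (\<chi> i. 2*pi* of_int (k i))"
  define z where "z = -x - (\<chi> i. 2*pi* of_int (k' i))"
  have abs_eq: "\<bar>y$i\<bar> = \<bar>z$i\<bar>" for i
    by (rule abs_red_eq[of _ "x$i" "k i" _ "k' i"]) (use k k' in \<open>auto simp: y_def z_def\<close>)
  have "norm y = norm z" unfolding norm_vec_def L2_set_def using abs_eq by simp
  hence "f y = f z" using rad k k' unfolding torus_radial_def y_def z_def by blast
  moreover have "f x = f y" unfolding y_def using per_red[OF per] by simp
  moreover have "f (-x) = f z" unfolding z_def using per_red[OF per] by simp
  ultimately show ?thesis by simp
qed

lemma conv_props:
  fixes s :: "real^'d::finite \<Rightarrow> real"
  assumes sm[measurable]: "s \<in> borel_measurable borel" and sb: "\<And>x. \<bar>s x\<bar> \<le> B" and sp: "periodic_fun s"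
  shows "torus_conv s s \<in> borel_measurable borel"
    and "\<bar>torus_conv s s x\<bar> \<le> B * torus_L1_norm s"
    and "periodic_fun (torus_conv s s)"
proof -
  let ?M = "lebesgue_on (torus_cube::(real^'d) set)"
  have finM: "finite_measure ?M" by (rule fin_M)
  interpret S: sigma_finite_measure ?M using finM by (simp add: finite_measure_def)
  have sndm[measurable]: "snd \<in> borel_measurable ((borel::(real^'d) measure) \<Otimes>\<^sub>M ?M)"
    using measurable_comp[OF measurable_snd id_borel_measurable_lebesgue_on] by (simp add: comp_def)
  have "(\<lambda>x. \<integral>y. s (x - y) * s y \<partial>?M) \<in> borel_measurable borel"
    by (rule S.borel_measurable_lebesgue_integral) measurable
  then show "torus_conv s s \<in> borel_measurable borel"
    unfolding torus_conv_def[abs_def] torus_integral_def by simp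
  have B0: "B \<ge> 0" using sb[of 0] by simp
  have sxm: "(\<lambda>y. s (x - y)) \<in> borel_measurable borel" by (rule borel_refl_shift[OF sm])
  have bb: "\<bar>s (x - y)\<bar> * \<bar>s y\<bar> \<le> B * B" for y by (rule mult_mono[OF sb sb B0]) simp
  have i1: "integrable ?M (\<lambda>y. s (x - y) * s y)"
    by (rule bnd_int[where B="B*B"]) (use sxm bb in \<open>auto intro!: borel_on simp: abs_mult\<close>)
  have i2: "integrable ?M (\<lambda>y. B * \<bar>s y\<bar>)"
    by (rule bnd_int[where B="B*B"]) (use B0 in \<open>auto intro!: borel_on simp: abs_mult intro: mult_mono[OF _ sb]\<close>)
  have "\<bar>\<integral>y. s (x - y) * s y \<partial>?M\<bar> \<le> (\<integral>y. B * \<bar>s y\<bar> \<partial>?M)"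
    by (rule integral_abs_bound_integral[OF i1 i2]) (use B0 in \<open>auto simp: abs_mult intro: mult_right_mono[OF sb]\<close>)
  then show "\<bar>torus_conv s s x\<bar> \<le> B * torus_L1_norm s"
    unfolding torus_conv_def torus_L1_norm_def torus_integral_def by simp
  show "periodic_fun (torus_conv s s)"
    unfolding periodic_fun_def
  proof (intro allI)
    fix x :: "real^'d" and i
    have "s (x + (2*pi) *\<^sub>R axis i 1 - y) = s (x - y)" for y
    proof -
      have "x + (2*pi) *\<^sub>R axis i 1 - y = (x - y) + (2*pi) *\<^sub>R axis i 1" by (simp add: algebra_simps)
      then show ?thesis using sp unfolding periodic_fun_def by metis
    qed
    then show "torus_conv s s (x + (2*pi) *\<^sub>R axis i 1) = torus_conv s s x"
      unfolding torus_conv_def by simp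
  qed
qed

lemma coeff_neg:
  fixes s :: "real^'d::finite \<Rightarrow> real"
  shows "fourier_coeff (\<lambda>x. complex_of_real (s x)) (-m) = cnj (fourier_coeff (\<lambda>x. complex_of_real (s x)) m)"
proof -
  have eqf: "(\<lambda>x. complex_of_real (s x) * cis (- int_dot (-m) x)) = (\<lambda>x. cnj (complex_of_real (s x) * cis (- int_dot m x)))"
    by (auto simp: int_dot_neg cis_cnj)
  have ic: "torus_integral (\<lambda>x. cnj (complex_of_real (s x) * cis (- int_dot m x))) = cnj (torus_integral (\<lambda>x. complex_of_real (s x) * cis (- int_dot m x)))"
    unfolding torus_integral_def by (rule Bochner_Integration.integral_cnj)
  show ?thesis unfolding fourier_coeff_def eqf ic by simp
qed

lemma coeff_real:
  fixes s :: "real^'d::finite \<Rightarrow> real"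
  assumes sm[measurable]: "s \<in> borel_measurable borel" and sb: "\<And>x. \<bar>s x\<bar> \<le> B" and sp: "periodic_fun s"
    and ev: "\<And>x. s (- x) = s x"
  shows "cnj (fourier_coeff (\<lambda>x. complex_of_real (s x)) m) = fourier_coeff (\<lambda>x. complex_of_real (s x)) m"
proof -
  define h where "h = (\<lambda>u. complex_of_real (s u) * cis (int_dot m u))"
  have hp: "periodic_fun h"
    unfolding periodic_fun_def h_def
  proof (intro allI)
    fix x :: "real^'d" and i
    have "cis (int_dot m (x + (2*pi) *\<^sub>R axis i 1)) = cis (int_dot m x)"
      using cis_int_dot_per[of "-m" x i] by (simp add: int_dot_neg)
    then show "complex_of_real (s (x + (2*pi) *\<^sub>R axis i 1)) * cis (int_dot m (x + (2*pi) *\<^sub>R axis i 1)) =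
               complex_of_real (s x) * cis (int_dot m x)"
      using sp unfolding periodic_fun_def by simp
  qed
  have em: "(\<lambda>x. cis (int_dot m x)) \<in> borel_measurable borel"
    using borel_e[of "-m"] by (simp add: int_dot_neg)
  have hm: "h \<in> borel_measurable borel" unfolding h_def using em by measurable
  have hb: "norm (h u) \<le> B" for u using sb[of u] unfolding h_def by (simp add: norm_mult)
  define I where "I = torus_integral (\<lambda>x. complex_of_real (s x) * cis (- int_dot m x))"
  have R: "torus_integral (\<lambda>x. h (- x)) = torus_integral h" by (rule torus_reflect[OF hp hm hb])
  have e1: "(\<lambda>x. h (- x)) = (\<lambda>x. complex_of_real (s x) * cis (- int_dot m x))"
    unfolding h_def by (auto simp: ev int_dot_neg2)
  have e2: "h = (\<lambda>x. cnj (complex_of_real (s x) * cis (- int_dot m x)))"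
    unfolding h_def by (auto simp: cis_cnj)
  have A: "torus_integral (\<lambda>x. h (- x)) = I" unfolding I_def e1 ..
  have B: "torus_integral h = cnj I"
    by (simp only: I_def e2 torus_integral_def Bochner_Integration.integral_cnj)
  have II: "cnj I = I" using R A B by simp
  show ?thesis
    by (simp only: fourier_coeff_def I_def[symmetric] complex_cnj_mult complex_cnj_complex_of_real II)
qed

lemma coeff_bound:
  fixes s :: "real^'d::finite \<Rightarrow> real"
  shows "norm (fourier_coeff (\<lambda>x. complex_of_real (s x)) m) \<le> (2*pi) powr (- real CARD('d)) * torus_L1_norm s"
proof -
  have "norm (torus_integral (\<lambda>x. complex_of_real (s x) * cis (- int_dot m x))) \<le>
        torus_integral (\<lambda>x. norm (complex_of_real (s x) * cis (- int_dot m x)))"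
    unfolding torus_integral_def by (rule integral_norm_bound)
  also have "\<dots> = torus_L1_norm s" unfolding torus_L1_norm_def by (simp add: norm_mult)
  finally have "norm (torus_integral (\<lambda>x. complex_of_real (s x) * cis (- int_dot m x))) \<le> torus_L1_norm s" .
  moreover have c0: "(2*pi) powr (- real CARD('d)) \<ge> 0" by simp
  ultimately show ?thesis unfolding fourier_coeff_def norm_mult norm_of_real
    by (simp add: mult_left_mono)
qed

lemma L2_integrable:
  fixes w :: "real^'d::finite \<Rightarrow> complex"
  assumes wm: "w \<in> borel_measurable (lebesgue_on torus_cube)"
    and w2: "integrable (lebesgue_on torus_cube) (\<lambda>x. (cmod (w x))\<^sup>2)"
  shows "integrable (lebesgue_on torus_cube) w"
proof -
  have finM: "finite_measure (lebesgue_on (torus_cube::(real^'d) set))" by (rule fin_M)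
  have "integrable (lebesgue_on torus_cube) (\<lambda>x. 1 + (cmod (w x))\<^sup>2)"
    by (rule Bochner_Integration.integrable_add[OF finite_measure.integrable_const[OF finM] w2])
  moreover have "norm (w x) \<le> norm (1 + (cmod (w x))\<^sup>2)" for x
  proof -
    have "cmod (w x) \<le> 1 + (cmod (w x))\<^sup>2"
    proof (cases "cmod (w x) \<le> 1")
      case True
      then show ?thesis using zero_le_power2[of "cmod (w x)"] by linarith
    next
      case False
      hence "cmod (w x) * 1 \<le> cmod (w x) * cmod (w x)" by (intro mult_left_mono) auto
      then show ?thesis by (simp add: power2_eq_square)
    qed
    then show ?thesis by simp
  qed
  ultimately show ?thesis
    by (intro Bochner_Integration.integrable_bound[OF _ wm]) auto
qed

lemma re_coeff:
  fixes w :: "real^'d::finite \<Rightarrow> complex"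
  assumes wm: "w \<in> borel_measurable (lebesgue_on torus_cube)"
    and wi: "integrable (lebesgue_on torus_cube) w"
  shows "fourier_coeff (\<lambda>x. complex_of_real (Re (w x))) m = (fourier_coeff w m + cnj (fourier_coeff w (-m))) / 2"
proof -
  let ?M = "lebesgue_on (torus_cube::(real^'d) set)"
  have em[measurable]: "(\<lambda>x. cis (- int_dot m x)) \<in> borel_measurable ?M" by (rule borel_on[OF borel_e])
  have [measurable]: "w \<in> borel_measurable ?M" by (rule wm)
  have cnjB: "(cnj::complex\<Rightarrow>complex) \<in> borel_measurable borel"
    by (intro borel_measurable_continuous_onI continuous_on_cnj continuous_on_id)
  have m1: "(\<lambda>x. w x * cis (- int_dot m x)) \<in> borel_measurable ?M"
    by (rule borel_measurable_times[OF wm em])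
  have m2: "(\<lambda>x. cnj (w x) * cis (- int_dot m x)) \<in> borel_measurable ?M"
    by (rule borel_measurable_times[OF measurable_compose[OF wm cnjB] em])
  have i1: "integrable ?M (\<lambda>x. w x * cis (- int_dot m x))"
    by (rule Bochner_Integration.integrable_bound[OF wi m1]) (auto simp: norm_mult)
  have i2: "integrable ?M (\<lambda>x. cnj (w x) * cis (- int_dot m x))"
    by (rule Bochner_Integration.integrable_bound[OF wi m2]) (auto simp: norm_mult)
  have eq: "complex_of_real (Re (w x)) * cis (- int_dot m x) = (w x * cis (- int_dot m x) + cnj (w x) * cis (- int_dot m x)) / 2" for x
    unfolding distrib_right[symmetric] complex_add_cnj by simp
  have eq2: "cnj (w x) * cis (- int_dot m x) = cnj (w x * cis (- int_dot (-m) x))" for x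
    by (simp add: int_dot_neg cis_cnj)
  have "torus_integral (\<lambda>x. complex_of_real (Re (w x)) * cis (- int_dot m x)) =
      (torus_integral (\<lambda>x. w x * cis (- int_dot m x)) + torus_integral (\<lambda>x. cnj (w x) * cis (- int_dot m x))) / 2"
    unfolding torus_integral_def eq using i1 i2 by simp
  also have "torus_integral (\<lambda>x. cnj (w x) * cis (- int_dot m x)) = cnj (torus_integral (\<lambda>x. w x * cis (- int_dot (-m) x)))"
    unfolding torus_integral_def eq2 by (rule Bochner_Integration.integral_cnj)
  finally have H: "torus_integral (\<lambda>x. complex_of_real (Re (w x)) * cis (- int_dot m x)) =
      (torus_integral (\<lambda>x. w x * cis (- int_dot m x)) + cnj (torus_integral (\<lambda>x. w x * cis (- int_dot (-m) x)))) / 2" .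
  show ?thesis unfolding fourier_coeff_def H by (simp add: field_simps)
qed

lemma alg_zero:
  fixes Z Y cZ cY a mu b j :: complex
  shows "(a - b) * ((Z * (j * ((a+mu)*cZ - b*(cZ+cY))) + ((-j) * ((a+mu)*Z - b*(Z+Y))) * cZ) + (Y * ((-j) * ((a-mu)*cY - b*(cY+cZ))) + (j*((a-mu)*Y - b*(Y+Z))) * cY)) - b * ((Z * ((-j)*((a-mu)*cY - b*(cY+cZ))) + ((-j)*((a+mu)*Z - b*(Z+Y))) * cY) + (cZ * (j*((a-mu)*Y - b*(Y+Z))) + (j*((a+mu)*cZ - b*(cZ+cY))) * Y)) = 0"
  by (simp add: algebra_simps)

lemma energy_bound:
  fixes z y :: "real \<Rightarrow> complex" and A mu b :: real
  assumes dz: "\<And>t. t \<ge> 0 \<Longrightarrow> (z has_vector_derivative (- \<i>) * (complex_of_real (A + mu) * z t - complex_of_real b * (z t + y t))) (at t within {0..})"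
    and dy: "\<And>t. t \<ge> 0 \<Longrightarrow> (y has_vector_derivative \<i> * (complex_of_real (A - mu) * y t - complex_of_real b * (y t + z t))) (at t within {0..})"
    and t: "t \<ge> 0"
  shows "(A - 2*\<bar>b\<bar>) * ((cmod (z t))\<^sup>2 + (cmod (y t))\<^sup>2) \<le> (A + 2*\<bar>b\<bar>) * ((cmod (z 0))\<^sup>2 + (cmod (y 0))\<^sup>2)"
proof -
  define E where "E = (\<lambda>s. complex_of_real (A - b) * (z s * cnj (z s) + y s * cnj (y s))
      - complex_of_real b * (z s * cnj (y s) + cnj (z s) * y s))"
  have dE: "(E has_vector_derivative 0) (at s within {0..})" if s: "s \<ge> 0" for s
  proof -
    let ?Z' = "(- \<i>) * (complex_of_real (A + mu) * z s - complex_of_real b * (z s + y s))"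
    let ?Y' = "\<i> * (complex_of_real (A - mu) * y s - complex_of_real b * (y s + z s))"
    have "(E has_vector_derivative
        (complex_of_real (A - b) * ((z s * cnj ?Z' + ?Z' * cnj (z s)) + (y s * cnj ?Y' + ?Y' * cnj (y s)))
        - complex_of_real b * ((z s * cnj ?Y' + ?Z' * cnj (y s)) + (cnj (z s) * ?Y' + cnj ?Z' * y s)))) (at s within {0..})"
      unfolding E_def
      by (intro has_vector_derivative_diff has_vector_derivative_mult_right has_vector_derivative_add
          has_vector_derivative_mult has_vector_derivative_cnj dz dy s)
    moreover have "complex_of_real (A - b) * ((z s * cnj ?Z' + ?Z' * cnj (z s)) + (y s * cnj ?Y' + ?Y' * cnj (y s)))
        - complex_of_real b * ((z s * cnj ?Y' + ?Z' * cnj (y s)) + (cnj (z s) * ?Y' + cnj ?Z' * y s)) = 0"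
      using alg_zero[of "complex_of_real A" "complex_of_real b" "z s" "\<i>" "complex_of_real mu" "cnj (z s)" "cnj (y s)" "y s"]
      by (simp add: algebra_simps)
    ultimately show ?thesis by simp
  qed
  obtain c where c: "\<And>x. x \<in> {0..} \<Longrightarrow> E x = c"
    by (rule has_vector_derivative_zero_constant[of "{0::real..}" E]) (use dE in auto)
  have Et: "E t = E 0" using c t by simp
  have ReE: "Re (E s) = (A - b) * ((cmod (z s))\<^sup>2 + (cmod (y s))\<^sup>2) - b * (2 * (Re (z s) * Re (y s) + Im (z s) * Im (y s)))" for s
    unfolding E_def cmod_power2 by (simp add: algebra_simps power2_eq_square)
  have Pb: "\<bar>2 * (Re (z s) * Re (y s) + Im (z s) * Im (y s))\<bar> \<le> (cmod (z s))\<^sup>2 + (cmod (y s))\<^sup>2" for s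
  proof -
    have "0 \<le> (Re (z s) - Re (y s))\<^sup>2 + (Im (z s) - Im (y s))\<^sup>2" by simp
    moreover have "0 \<le> (Re (z s) + Re (y s))\<^sup>2 + (Im (z s) + Im (y s))\<^sup>2" by simp
    ultimately show ?thesis unfolding cmod_power2 by (simp add: power2_eq_square algebra_simps abs_le_iff)
  qed
  have bP: "\<bar>b * (2 * (Re (z s) * Re (y s) + Im (z s) * Im (y s)))\<bar> \<le> \<bar>b\<bar> * ((cmod (z s))\<^sup>2 + (cmod (y s))\<^sup>2)" for s
    using mult_left_mono[OF Pb[of s], of "\<bar>b\<bar>"] by (simp only: abs_mult[of b])
  have N0: "0 \<le> (cmod (z s))\<^sup>2 + (cmod (y s))\<^sup>2" for s by simp
  have lo: "(A - 2*\<bar>b\<bar>) * ((cmod (z t))\<^sup>2 + (cmod (y t))\<^sup>2) \<le> Re (E t)"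
  proof -
    have "(A - 2*\<bar>b\<bar>) * ((cmod (z t))\<^sup>2 + (cmod (y t))\<^sup>2) \<le> (A - b - \<bar>b\<bar>) * ((cmod (z t))\<^sup>2 + (cmod (y t))\<^sup>2)"
      by (rule mult_right_mono[OF _ N0]) linarith
    then show ?thesis unfolding ReE using bP[of t] by (simp add: algebra_simps abs_le_iff)
  qed
  have hi: "Re (E 0) \<le> (A + 2*\<bar>b\<bar>) * ((cmod (z 0))\<^sup>2 + (cmod (y 0))\<^sup>2)"
  proof -
    have "(A - b + \<bar>b\<bar>) * ((cmod (z 0))\<^sup>2 + (cmod (y 0))\<^sup>2) \<le> (A + 2*\<bar>b\<bar>) * ((cmod (z 0))\<^sup>2 + (cmod (y 0))\<^sup>2)"
      by (rule mult_right_mono[OF _ N0]) linarith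
    then show ?thesis unfolding ReE using bP[of 0] by (simp add: algebra_simps abs_le_iff)
  qed
  show ?thesis using lo hi Et by simp
qed

lemma zero_mode:
  fixes z :: "real \<Rightarrow> complex" and A mu b :: real
  assumes dz: "\<And>t. t \<ge> 0 \<Longrightarrow> (z has_vector_derivative (- \<i>) * (complex_of_real (A + mu) * z t - complex_of_real b * (z t + cnj (z t)))) (at t within {0..})"
    and A0: "A + mu = 0" and z0: "z 0 = 0" and t: "t \<ge> 0"
  shows "z t = 0"
proof -
  have dS: "((\<lambda>s. z s + cnj (z s)) has_vector_derivative 0) (at s within {0..})" if s: "s \<ge> 0" for s
  proof -
    have "((\<lambda>s. z s + cnj (z s)) has_vector_derivative
      ((- \<i>) * (complex_of_real (A + mu) * z s - complex_of_real b * (z s + cnj (z s))) +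
       cnj ((- \<i>) * (complex_of_real (A + mu) * z s - complex_of_real b * (z s + cnj (z s)))))) (at s within {0..})"
      by (intro has_vector_derivative_add has_vector_derivative_cnj dz s)
    moreover have "(- \<i>) * (complex_of_real (A + mu) * z s - complex_of_real b * (z s + cnj (z s))) +
       cnj ((- \<i>) * (complex_of_real (A + mu) * z s - complex_of_real b * (z s + cnj (z s)))) = 0"
      using A0 by (simp add: algebra_simps)
    ultimately show ?thesis by simp
  qed
  obtain c where c: "\<And>x. x \<in> {0..} \<Longrightarrow> z x + cnj (z x) = c"
    by (rule has_vector_derivative_zero_constant[of "{0::real..}" "\<lambda>s. z s + cnj (z s)"]) (use dS in auto)
  have S0: "z s + cnj (z s) = 0" if "s \<ge> 0" for s using c[of s] c[of 0] z0 that by simp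
  have dz0: "(z has_vector_derivative 0) (at s within {0..})" if s: "s \<ge> 0" for s
    using dz[OF s] S0[OF s] A0 by simp
  obtain c' where c': "\<And>x. x \<in> {0..} \<Longrightarrow> z x = c'"
    by (rule has_vector_derivative_zero_constant[of "{0::real..}" z]) (use dz0 in auto)
  show ?thesis using c'[of t] c'[of 0] z0 t by simp
qed

lemma int_norm2_neg: "int_norm2 (-m) = int_norm2 m"
  unfolding int_norm2_def by simp

lemma int_norm2_nonneg: "int_norm2 m \<ge> 0"
  unfolding int_norm2_def by (simp add: sum_nonneg)

lemma int_norm2_ge1:
  assumes "m \<noteq> 0"
  shows "int_norm2 m \<ge> 1"
proof -
  obtain i where i: "m $ i \<noteq> 0" using assms by (auto simp: vec_eq_iff)
  have "1 \<le> real_of_int (m $ i) ^ 2"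
  proof -
    have "1 \<le> \<bar>m $ i\<bar>" using i by simp
    hence "(1::real) \<le> \<bar>real_of_int (m $ i)\<bar>" by linarith
    hence "1 * 1 \<le> \<bar>real_of_int (m $ i)\<bar> * \<bar>real_of_int (m $ i)\<bar>" by (intro mult_mono) auto
    then show ?thesis by (simp add: power2_eq_square)
  qed
  also have "\<dots> \<le> int_norm2 m"
    unfolding int_norm2_def by (rule member_le_sum) auto
  finally show ?thesis .
qed

theorem theorem3p3:
  fixes \<sigma>1 :: "real^'d::finite \<Rightarrow> real"
    and \<sigma>2 :: "real^'n::finite \<Rightarrow> real"
    and \<gamma> :: real
    and k :: "int^'d"
    and w :: "real \<Rightarrow> real^'d \<Rightarrow> complex"
  assumes n_ge: "CARD('n) \<ge> 3"
    and \<sigma>1_nonneg: "\<forall>x. \<sigma>1 x \<ge> 0"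
    and \<sigma>1_smooth: "smooth_fun \<sigma>1"
    and \<sigma>1_periodic: "periodic_fun \<sigma>1"
    and \<sigma>1_radial: "torus_radial \<sigma>1"
    and \<sigma>1_int: "torus_integral \<sigma>1 \<noteq> 0"
    and \<sigma>2_nonneg: "\<forall>x. \<sigma>2 x \<ge> 0"
    and \<sigma>2_smooth: "smooth_fun \<sigma>2"
    and \<sigma>2_radial: "\<forall>x y. norm x = norm y \<longrightarrow> \<sigma>2 x = \<sigma>2 y"
    and \<sigma>2_supp: "compact (closure {x. \<sigma>2 x \<noteq> 0})"
    and \<sigma>2_L2: "integrable lborel (\<lambda>\<xi>. (cmod (fourier_Rn \<sigma>2 \<xi>))\<^sup>2 / (norm \<xi>)\<^sup>2)"
    and \<gamma>_pos: "\<gamma> > 0"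
    and small: "4 * \<gamma>\<^sup>2 * kappa \<sigma>2 * (torus_L1_norm \<sigma>1)\<^sup>2 < 1"
    and w_H1: "\<forall>t\<ge>0. in_H1 (w t)"
    and w_cont: "\<forall>t\<ge>0. ((\<lambda>s. H1_norm (\<lambda>x. w s x - w t x)) \<longlongrightarrow> 0) (at t within {0..})"
    and w_eq: "\<forall>m t. t \<ge> 0 \<longrightarrow>
       ((\<lambda>s. fourier_coeff (w s) m) has_vector_derivative
          (- \<i>) * ( complex_of_real (int_norm2 m / 2 + int_dot m (\<chi> i. of_int (k $ i)))
                        * fourier_coeff (w t) m
                     - complex_of_real (2 * \<gamma>\<^sup>2 * kappa \<sigma>2) *
                        fourier_coeff (\<lambda>x. complex_of_real
                          (torus_conv (torus_conv \<sigma>1 \<sigma>1) (\<lambda>y. Re (w t y)) x)) m))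
       (at t within {0..})"
    and w_mean: "torus_integral (w 0) = 0"
  shows "\<exists>C>0. \<forall>t\<ge>0. H1_norm (w t) \<le> C"
proof -
  let ?M = "lebesgue_on (torus_cube::(real^'d) set)"
  let ?kk = "(\<chi> i. of_int (k $ i)) :: real^'d"
  have s1c: "continuous_on UNIV \<sigma>1"
    using \<sigma>1_smooth unfolding smooth_fun_def by (metis iter_pderiv.simps(1))
  have s1m: "\<sigma>1 \<in> borel_measurable borel" by (rule borel_measurable_continuous_onI[OF s1c])
  obtain B where B: "\<And>x. \<bar>\<sigma>1 x\<bar> \<le> B" using bounded_per[OF \<sigma>1_periodic s1c] by blast
  have ev: "\<And>x. \<sigma>1 (- x) = \<sigma>1 x" by (rule even_radial[OF \<sigma>1_periodic \<sigma>1_radial])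
  define Sg where "Sg = torus_conv \<sigma>1 \<sigma>1"
  have Sgm: "Sg \<in> borel_measurable borel" and Sgb: "\<And>x. \<bar>Sg x\<bar> \<le> B * torus_L1_norm \<sigma>1"
    and Sgp: "periodic_fun Sg"
    using conv_props[OF s1m B \<sigma>1_periodic] unfolding Sg_def by auto
  define fs where "fs m = fourier_coeff (\<lambda>x. complex_of_real (\<sigma>1 x)) m" for m
  define r where "r m = Re (fs m)" for m
  have fs_real: "fs m = complex_of_real (r m)" for m
  proof -
    have "cnj (fs m) = fs m" unfolding fs_def by (rule coeff_real[OF s1m B \<sigma>1_periodic ev])
    then show ?thesis unfolding r_def by (simp add: complex_eq_iff)
  qed
  have r_neg: "r (-m) = r m" for m
    unfolding r_def fs_def coeff_neg by simp
  have L1nn: "torus_L1_norm \<sigma>1 \<ge> 0"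
    unfolding torus_L1_norm_def torus_integral_def by (rule Bochner_Integration.integral_nonneg) simp
  have r_bound: "\<bar>r m\<bar> \<le> (2*pi) powr (- real CARD('d)) * torus_L1_norm \<sigma>1" for m
    using coeff_bound[of \<sigma>1 m] abs_Re_le_cmod[of "fs m"] unfolding r_def fs_def by linarith
  have s1int: "integrable ?M \<sigma>1"
    by (rule bnd_int[OF borel_on[OF s1m], of B]) (use B in simp)
  have FSg: "fourier_coeff (\<lambda>x. complex_of_real (Sg x)) m = of_real ((2*pi)^CARD('d)) * fs m * fs m" for m
    unfolding Sg_def fs_def by (rule conv_fourier[OF s1m B \<sigma>1_periodic borel_on[OF s1m] s1int])
  define b where "b m = \<gamma>\<^sup>2 * kappa \<sigma>2 * ((2*pi)^CARD('d))\<^sup>2 * (r m)\<^sup>2" for m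
  have b_neg: "b (-m) = b m" for m unfolding b_def r_neg ..
  have ReB: "(Re::complex\<Rightarrow>real) \<in> borel_measurable borel"
    by (intro borel_measurable_continuous_onI continuous_on_Re continuous_on_id)
  have key: "complex_of_real (2 * \<gamma>\<^sup>2 * kappa \<sigma>2) *
        fourier_coeff (\<lambda>x. complex_of_real (torus_conv (torus_conv \<sigma>1 \<sigma>1) (\<lambda>y. Re (w t y)) x)) m
      = complex_of_real (b m) * (fourier_coeff (w t) m + cnj (fourier_coeff (w t) (-m)))"
    if t: "t \<ge> 0" for t m
  proof -
    have H: "in_H1 (w t)" using w_H1 t by blast
    have wm: "w t \<in> borel_measurable ?M" using H unfolding in_H1_def by blast
    have w2: "integrable ?M (\<lambda>x. (cmod (w t x))\<^sup>2)" using H unfolding in_H1_def by blast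
    have wi: "integrable ?M (w t)" by (rule L2_integrable[OF wm w2])
    have Rem: "(\<lambda>y. Re (w t y)) \<in> borel_measurable ?M"
      using measurable_compose[OF wm ReB] by (simp add: comp_def)
    have Rei: "integrable ?M (\<lambda>y. Re (w t y))"
      by (rule Bochner_Integration.integrable_bound[OF wi Rem]) (simp add: abs_Re_le_cmod)
    have "fourier_coeff (\<lambda>x. complex_of_real (torus_conv Sg (\<lambda>y. Re (w t y)) x)) m =
        of_real ((2*pi)^CARD('d)) * fourier_coeff (\<lambda>x. complex_of_real (Sg x)) m * fourier_coeff (\<lambda>x. complex_of_real (Re (w t x))) m"
      by (rule conv_fourier[OF Sgm Sgb Sgp Rem Rei])
    also have "\<dots> = of_real ((2*pi)^CARD('d)) * (of_real ((2*pi)^CARD('d)) * fs m * fs m) *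
        ((fourier_coeff (w t) m + cnj (fourier_coeff (w t) (-m))) / 2)"
      unfolding FSg re_coeff[OF wm wi] ..
    finally have F: "fourier_coeff (\<lambda>x. complex_of_real (torus_conv Sg (\<lambda>y. Re (w t y)) x)) m = \<dots>" .
    show ?thesis unfolding Sg_def[symmetric] F fs_real b_def
      by (simp add: field_simps power2_eq_square)
  qed
  have dz: "((\<lambda>s. fourier_coeff (w s) m) has_vector_derivative
      (- \<i>) * (complex_of_real (int_norm2 m / 2 + int_dot m ?kk) * fourier_coeff (w t) m
        - complex_of_real (b m) * (fourier_coeff (w t) m + cnj (fourier_coeff (w t) (-m))))) (at t within {0..})"
    if t: "t \<ge> 0" for t m
    using w_eq[rule_format, OF t, of m] unfolding key[OF t] .
  have dy: "((\<lambda>s. cnj (fourier_coeff (w s) (-m))) has_vector_derivative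
      \<i> * (complex_of_real (int_norm2 m / 2 - int_dot m ?kk) * cnj (fourier_coeff (w t) (-m))
        - complex_of_real (b m) * (cnj (fourier_coeff (w t) (-m)) + fourier_coeff (w t) m))) (at t within {0..})"
    if t: "t \<ge> 0" for t m
  proof -
    have "((\<lambda>s. cnj (fourier_coeff (w s) (-m))) has_vector_derivative
      cnj ((- \<i>) * (complex_of_real (int_norm2 (-m) / 2 + int_dot (-m) ?kk) * fourier_coeff (w t) (-m)
        - complex_of_real (b (-m)) * (fourier_coeff (w t) (-m) + cnj (fourier_coeff (w t) (- (-m))))))) (at t within {0..})"
      by (rule has_vector_derivative_cnj[OF dz[OF t]])
    moreover have "cnj ((- \<i>) * (complex_of_real (int_norm2 (-m) / 2 + int_dot (-m) ?kk) * fourier_coeff (w t) (-m)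
        - complex_of_real (b (-m)) * (fourier_coeff (w t) (-m) + cnj (fourier_coeff (w t) (- (-m))))))
      = \<i> * (complex_of_real (int_norm2 m / 2 - int_dot m ?kk) * cnj (fourier_coeff (w t) (-m))
        - complex_of_real (b m) * (cnj (fourier_coeff (w t) (-m)) + fourier_coeff (w t) m))"
      by (simp add: int_norm2_neg int_dot_neg b_neg)
    ultimately show ?thesis by simp
  qed
  define \<theta> where "\<theta> = 4 * \<gamma>\<^sup>2 * kappa \<sigma>2 * (torus_L1_norm \<sigma>1)\<^sup>2"
  have kap: "kappa \<sigma>2 \<ge> 0"
    unfolding kappa_def by (intro mult_nonneg_nonneg Bochner_Integration.integral_nonneg) auto
  have th0: "\<theta> \<ge> 0" unfolding \<theta>_def using kap by simp
  have th1: "\<theta> < 1" unfolding \<theta>_def using small .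
  have b_bound: "\<bar>b m\<bar> \<le> \<theta> / 4" for m
  proof -
    have pp: "(2*pi)^CARD('d) * (2*pi) powr (- real CARD('d)) = 1"
      using pow_c[where 'd='d] by (metis mult.commute of_real_1 of_real_eq_iff of_real_mult)
    have "(2*pi)^CARD('d) * \<bar>r m\<bar> \<le> (2*pi)^CARD('d) * ((2*pi) powr (- real CARD('d)) * torus_L1_norm \<sigma>1)"
      by (rule mult_left_mono[OF r_bound]) simp
    also have "\<dots> = torus_L1_norm \<sigma>1" using pp by (simp add: mult.assoc[symmetric])
    finally have "(2*pi)^CARD('d) * \<bar>r m\<bar> \<le> torus_L1_norm \<sigma>1" .
    hence "((2*pi)^CARD('d) * \<bar>r m\<bar>)\<^sup>2 \<le> (torus_L1_norm \<sigma>1)\<^sup>2"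
      by (intro power_mono) auto
    hence "((2*pi)^CARD('d))\<^sup>2 * (r m)\<^sup>2 \<le> (torus_L1_norm \<sigma>1)\<^sup>2"
      by (simp add: power_mult_distrib)
    hence "\<gamma>\<^sup>2 * kappa \<sigma>2 * (((2*pi)^CARD('d))\<^sup>2 * (r m)\<^sup>2) \<le> \<gamma>\<^sup>2 * kappa \<sigma>2 * (torus_L1_norm \<sigma>1)\<^sup>2"
      by (intro mult_left_mono) (use kap in auto)
    moreover have "b m \<ge> 0" unfolding b_def using kap by simp
    ultimately show ?thesis unfolding b_def \<theta>_def by (simp add: mult.assoc)
  qed
  define K where "K = (1 + \<theta>) / (1 - \<theta>)"
  have K1: "K \<ge> 1" unfolding K_def using th0 th1 by (simp add: field_simps)
  have mode_bound: "(cmod (fourier_coeff (w t) m))\<^sup>2 \<le> K * ((cmod (fourier_coeff (w 0) m))\<^sup>2 + (cmod (fourier_coeff (w 0) (-m)))\<^sup>2)"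
    if t: "t \<ge> 0" for t m
  proof (cases "m = 0")
    case True
    have z0: "fourier_coeff (w 0) 0 = 0"
      using w_mean unfolding fourier_coeff_def by simp
    have d0: "((\<lambda>s. fourier_coeff (w s) 0) has_vector_derivative
        (- \<i>) * (complex_of_real (int_norm2 (0::int^'d) / 2 + int_dot (0::int^'d) ?kk) * fourier_coeff (w s') 0
          - complex_of_real (b 0) * (fourier_coeff (w s') 0 + cnj (fourier_coeff (w s') 0)))) (at s' within {0..})"
      if "s' \<ge> 0" for s'
      using dz[OF that, of 0] by (simp only: minus_zero)
    have n0: "int_norm2 (0::int^'d) = 0" unfolding int_norm2_def by simp
    have i0: "int_dot (0::int^'d) ?kk = 0" unfolding int_dot_def by simp
    have a0: "int_norm2 (0::int^'d) / 2 + int_dot (0::int^'d) ?kk = 0" using n0 i0 by simp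
    have "fourier_coeff (w t) 0 = 0"
      using zero_mode[of "\<lambda>s. fourier_coeff (w s) 0", OF d0 a0 z0 t] by simp
    then show ?thesis using True K1 by simp
  next
    case False
    define A where "A = int_norm2 m / 2"
    have A1: "A \<ge> 1/2" unfolding A_def using int_norm2_ge1[OF False] by simp
    have E: "(A - 2*\<bar>b m\<bar>) * ((cmod (fourier_coeff (w t) m))\<^sup>2 + (cmod (cnj (fourier_coeff (w t) (-m))))\<^sup>2)
        \<le> (A + 2*\<bar>b m\<bar>) * ((cmod (fourier_coeff (w 0) m))\<^sup>2 + (cmod (cnj (fourier_coeff (w 0) (-m))))\<^sup>2)"
      unfolding A_def
      by (rule energy_bound[of "\<lambda>s. fourier_coeff (w s) m" "int_norm2 m / 2" "int_dot m ?kk" "b m"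
            "\<lambda>s. cnj (fourier_coeff (w s) (-m))", OF _ _ t])
         (use dz dy in simp_all)
    define Nt where "Nt = (cmod (fourier_coeff (w t) m))\<^sup>2 + (cmod (fourier_coeff (w t) (-m)))\<^sup>2"
    define N0 where "N0 = (cmod (fourier_coeff (w 0) m))\<^sup>2 + (cmod (fourier_coeff (w 0) (-m)))\<^sup>2"
    have E': "(A - 2*\<bar>b m\<bar>) * Nt \<le> (A + 2*\<bar>b m\<bar>) * N0" using E unfolding Nt_def N0_def by simp
    have Nt0: "Nt \<ge> 0" "N0 \<ge> 0" unfolding Nt_def N0_def by simp_all
    have l1: "A * (1 - \<theta>) \<le> A - 2*\<bar>b m\<bar>"
    proof -
      have "\<theta> / 2 \<le> \<theta> * A" using A1 th0 by (simp add: mult_left_mono[of "1/2" A \<theta>, simplified])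
      then show ?thesis using b_bound[of m] by (simp add: algebra_simps)
    qed
    have l2: "A + 2*\<bar>b m\<bar> \<le> A * (1 + \<theta>)"
    proof -
      have "\<theta> / 2 \<le> \<theta> * A" using A1 th0 by (simp add: mult_left_mono[of "1/2" A \<theta>, simplified])
      then show ?thesis using b_bound[of m] by (simp add: algebra_simps)
    qed
    have "A * (1 - \<theta>) * Nt \<le> A * (1 + \<theta>) * N0"
    proof -
      have "A * (1 - \<theta>) * Nt \<le> (A - 2*\<bar>b m\<bar>) * Nt" by (rule mult_right_mono[OF l1 Nt0(1)])
      also have "\<dots> \<le> (A + 2*\<bar>b m\<bar>) * N0" by (rule E')
      also have "\<dots> \<le> A * (1 + \<theta>) * N0" by (rule mult_right_mono[OF l2 Nt0(2)])
      finally show ?thesis .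
    qed
    hence "(1 - \<theta>) * Nt \<le> (1 + \<theta>) * N0" using A1 by (simp add: mult.assoc)
    hence "Nt \<le> K * N0" unfolding K_def using th1 by (simp add: field_simps)
    moreover have "(cmod (fourier_coeff (w t) m))\<^sup>2 \<le> Nt" unfolding Nt_def by simp
    ultimately show ?thesis unfolding N0_def by linarith
  qed
  define h0 where "h0 = H1_weight_sum (w 0)"
  have h0s: "h0 summable_on UNIV" using w_H1 unfolding h0_def in_H1_def by auto
  have surj_neg: "(uminus :: int^'d \<Rightarrow> int^'d) ` UNIV = UNIV"
    by (rule surjI[of uminus uminus]) simp
  have injn: "inj_on (uminus :: int^'d \<Rightarrow> int^'d) UNIV" by (simp add: inj_on_def)
  have h0ns: "(\<lambda>m. h0 (-m)) summable_on UNIV"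
    using summable_on_reindex[OF injn, of h0] h0s surj_neg by (simp add: comp_def)
  have h0ni: "infsum (\<lambda>m. h0 (-m)) UNIV = infsum h0 UNIV"
    using infsum_reindex[OF injn, of h0] surj_neg by (simp add: comp_def)
  define S0 where "S0 = infsum h0 UNIV"
  have S0nn: "S0 \<ge> 0" unfolding S0_def h0_def H1_weight_sum_def
    by (rule infsum_nonneg) (simp add: int_norm2_nonneg add_nonneg_nonneg)
  have sumbound: "infsum (H1_weight_sum (w t)) UNIV \<le> K * (S0 + S0)" if t: "t \<ge> 0" for t
  proof -
    have hts: "H1_weight_sum (w t) summable_on UNIV" using w_H1 t unfolding in_H1_def by auto
    have ss: "(\<lambda>m. K * (h0 m + h0 (-m))) summable_on UNIV"
      by (intro summable_on_cmult_right summable_on_add h0s h0ns)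
    have "infsum (H1_weight_sum (w t)) UNIV \<le> infsum (\<lambda>m. K * (h0 m + h0 (-m))) UNIV"
    proof (rule infsum_mono[OF hts ss])
      fix m :: "int^'d"
      have "(1 + int_norm2 m) * (cmod (fourier_coeff (w t) m))\<^sup>2 \<le>
            (1 + int_norm2 m) * (K * ((cmod (fourier_coeff (w 0) m))\<^sup>2 + (cmod (fourier_coeff (w 0) (-m)))\<^sup>2))"
        by (rule mult_left_mono[OF mode_bound[OF t]]) (simp add: int_norm2_nonneg add_nonneg_nonneg)
      then show "H1_weight_sum (w t) m \<le> K * (h0 m + h0 (-m))"
        unfolding H1_weight_sum_def h0_def int_norm2_neg by (simp add: algebra_simps)
    qed
    also have "\<dots> = K * (S0 + S0)"
      unfolding S0_def by (simp add: infsum_cmult_right infsum_add[OF h0s h0ns] ss h0ni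
          summable_on_add[OF h0s h0ns])
    finally show ?thesis .
  qed
  define C where "C = sqrt (K * (S0 + S0)) + 1"
  have "K * (S0 + S0) \<ge> 0" using K1 S0nn by simp
  hence "sqrt (K * (S0 + S0)) \<ge> 0" by simp
  hence Cpos: "C > 0" unfolding C_def by linarith
  have "H1_norm (w t) \<le> C" if t: "t \<ge> 0" for t
  proof -
    have "H1_norm (w t) \<le> sqrt (K * (S0 + S0))"
      unfolding H1_norm_def by (rule real_sqrt_le_mono[OF sumbound[OF t]])
    then show ?thesis unfolding C_def by simp
  qed
  then show ?thesis using Cpos by blast
qed

end
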